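(* Let $m\ge1$, $n\ge1$, $N>2n$, let $\Sigma_0,\dots,\Sigma_n\in\mathbb R^{m\times m}$ and let $\mathbf T_n$ be the block-Toeplitz matrix whose $(i,j)$ block ($i,j=0,\dots,n$) is $\Sigma_{i-j}$ if $i\ge j$ and $\Sigma_{j-i}^\top$ if $i<j$. Assume there exists a symmetric positive definite $mN\times mN$ matrix $\bar{\boldsymbol\Sigma}_N$ with $E_n^\top\bar{\boldsymbol\Sigma}_NE_n=\mathbf T_n$ and $\mathbf U_N^\top\bar{\boldsymbol\Sigma}_N\mathbf U_N=\bar{\boldsymbol\Sigma}_N$. Let $(\Lambda_k,\Theta_k)$, $k\ge1$, be a sequence in $\mathcal L_+$ with $\|(\Lambda_k,\Theta_k)\|\to\infty$. Then $\|A(\Lambda_k,\Theta_k)\|\to\infty$, and consequently $J(\Lambda_k,\Theta_k)\to\infty$, where $J(\Lambda,\Theta)=\operatorname{Tr}(\Lambda\mathbf T_n)-\log\det A(\Lambda,\Theta)$.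
   Context: $\mathfrak S_k$ denotes the space of real symmetric $mk\times mk$ matrices. $E_n$ is the $mN\times m(n+1)$ matrix with $N\times(n+1)$ blocks of size $m\times m$ whose $(i,i)$ blocks ($i=1,\dots,n+1$) are $I_m$ and other blocks $0$. $\mathbf U_N$ is the $mN\times mN$ block shift matrix whose $(i,i+1)$ blocks ($i=1,\dots,N-1$) and $(N,1)$ block are $I_m$, others $0$. The linear map $A:\mathfrak S_{n+1}\times\mathfrak S_N\to\mathfrak S_N$ is $A(\Lambda,\Theta)=E_n\Lambda E_n^\top+\mathbf U_N\Theta\mathbf U_N^\top-\Theta$, and $\mathcal L_+=\{(\Lambda,\Theta)\in(\ker A)^\perp:A(\Lambda,\Theta)>0\}$, orthogonality and norms being with respect to the Frobenius-type inner product $\langle(\Lambda_1,\Theta_1),(\Lambda_2,\Theta_2)\rangle=\operatorname{Tr}(\Lambda_1\Lambda_2)+\operatorname{Tr}(\Theta_1\Theta_2)$ (any norms may be used since all spaces are finite-dimensional). *)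

theory Defs
  imports Complex_Main "Jordan_Normal_Form.Matrix" "Jordan_Normal_Form.Determinant"
begin

(* All block indices are 0-based: blocks are m x m, block (p,q) of a matrix M
   consists of entries (p*m + a, q*m + b), a,b < m. *)

definition mtrace :: "real mat \<Rightarrow> real" where
  "mtrace M = (\<Sum>i<dim_row M. M $$ (i,i))"

definition fro :: "real mat \<Rightarrow> real" where
  "fro M = sqrt (\<Sum>i<dim_row M. \<Sum>j<dim_col M. (M $$ (i,j))^2)"

definition symS :: "nat \<Rightarrow> nat \<Rightarrow> real mat set" where
  "symS m k = {M. M \<in> carrier_mat (m*k) (m*k) \<and> transpose_mat M = M}"

definition posdef :: "nat \<Rightarrow> real mat \<Rightarrow> bool" where
  "posdef k M \<longleftrightarrow> M \<in> carrier_mat k k \<and> transpose_mat M = M \<and>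
     (\<forall>v\<in>carrier_vec k. v \<noteq> 0\<^sub>v k \<longrightarrow> v \<bullet> (M *\<^sub>v v) > 0)"

definition Emat :: "nat \<Rightarrow> nat \<Rightarrow> nat \<Rightarrow> real mat" where
  "Emat m n N = mat (m*N) (m*(n+1))
     (\<lambda>(i,j). if i div m = j div m \<and> i mod m = j mod m then 1 else 0)"

definition Umat :: "nat \<Rightarrow> nat \<Rightarrow> real mat" where
  "Umat m N = mat (m*N) (m*N)
     (\<lambda>(i,j). if j div m = (i div m + 1) mod N \<and> i mod m = j mod m then 1 else 0)"

definition Tmat :: "nat \<Rightarrow> nat \<Rightarrow> (nat \<Rightarrow> real mat) \<Rightarrow> real mat" where
  "Tmat m n Sig = mat (m*(n+1)) (m*(n+1))
     (\<lambda>(i,j). if i div m \<ge> j div m then Sig (i div m - j div m) $$ (i mod m, j mod m)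
              else transpose_mat (Sig (j div m - i div m)) $$ (i mod m, j mod m))"

definition Aop :: "nat \<Rightarrow> nat \<Rightarrow> nat \<Rightarrow> real mat \<times> real mat \<Rightarrow> real mat" where
  "Aop m n N LT = Emat m n N * fst LT * transpose_mat (Emat m n N)
     + Umat m N * snd LT * transpose_mat (Umat m N) - snd LT"

definition pinner :: "real mat \<times> real mat \<Rightarrow> real mat \<times> real mat \<Rightarrow> real" where
  "pinner X Y = mtrace (fst X * fst Y) + mtrace (snd X * snd Y)"

definition pnorm :: "real mat \<times> real mat \<Rightarrow> real" where
  "pnorm X = sqrt (pinner X X)"

definition Lplus :: "nat \<Rightarrow> nat \<Rightarrow> nat \<Rightarrow> (real mat \<times> real mat) set" where
  "Lplus m n N = {X. fst X \<in> symS m (n+1) \<and> snd X \<in> symS m N \<and>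
     (\<forall>Y. fst Y \<in> symS m (n+1) \<and> snd Y \<in> symS m N \<and> Aop m n N Y = 0\<^sub>m (m*N) (m*N)
          \<longrightarrow> pinner X Y = 0) \<and>
     posdef (m*N) (Aop m n N X)}"

definition Jfun :: "nat \<Rightarrow> nat \<Rightarrow> nat \<Rightarrow> (nat \<Rightarrow> real mat) \<Rightarrow> real mat \<times> real mat \<Rightarrow> real" where
  "Jfun m n N Sig X = mtrace (fst X * Tmat m n Sig) - ln (det (Aop m n N X))"

end

theory Submission
  imports Defs
begin

lemma bw_finite:
  fixes f :: "nat \<Rightarrow> 'i \<Rightarrow> real"
  assumes "finite I" and "\<And>k i. i \<in> I \<Longrightarrow> \<bar>f k i\<bar> \<le> C"
  shows "\<exists>g. strict_mono g \<and> (\<forall>i\<in>I. convergent (\<lambda>k. f (g k) i))"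
  using assms
proof (induction I rule: finite_induct)
  case empty
  then show ?case by (intro exI[of _ id]) (auto simp: strict_mono_def)
next
  case (insert a I)
  then obtain g where g: "strict_mono g" "\<forall>i\<in>I. convergent (\<lambda>k. f (g k) i)" by auto
  obtain s where s: "strict_mono s" "monoseq (\<lambda>k. f (g (s k)) a)"
    using seq_monosub[of "\<lambda>k. f (g k) a"] by blast
  have "Bseq (\<lambda>k. f (g (s k)) a)"
    using insert.prems by (intro BseqI'[of _ C]) auto
  then have ca: "convergent (\<lambda>k. f (g (s k)) a)"
    using s(2) Bseq_monoseq_convergent by blast
  have "\<forall>i\<in>I. convergent (\<lambda>k. f (g (s k)) i)"
  proof
    fix i assume "i \<in> I"
    then have "convergent ((\<lambda>k. f (g k) i) \<circ> s)"
      using g(2) s(1) convergent_subseq_convergent by blast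
    then show "convergent (\<lambda>k. f (g (s k)) i)" by (simp add: o_def)
  qed
  moreover have "strict_mono (\<lambda>k. g (s k))" using strict_mono_o[of g s] g(1) s(1) by (simp add: o_def)
  ultimately show ?case using ca by (intro exI[of _ "\<lambda>k. g (s k)"]) auto
qed

definition econv :: "(nat \<Rightarrow> real mat) \<Rightarrow> real mat \<Rightarrow> bool" where
  "econv M L \<longleftrightarrow> (\<forall>k. M k \<in> carrier_mat (dim_row L) (dim_col L)) \<and>
     (\<forall>i<dim_row L. \<forall>j<dim_col L. (\<lambda>k. M k $$ (i,j)) \<longlonglongrightarrow> L $$ (i,j))"

lemma econv_const: "econv (\<lambda>k. L) L"
  unfolding econv_def by auto

lemma econv_mult:
  assumes "econv M L" "econv N K" "dim_col L = dim_row K"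
  shows "econv (\<lambda>k. M k * N k) (L * K)"
  unfolding econv_def
proof (intro conjI allI impI)
  fix k show "M k * N k \<in> carrier_mat (dim_row (L * K)) (dim_col (L * K))"
    using assms unfolding econv_def by (auto intro!: mult_carrier_mat)
next
  fix i j assume ij: "i < dim_row (L * K)" "j < dim_col (L * K)"
  have "(\<lambda>k. \<Sum>l\<in>{0..<dim_row K}. M k $$ (i,l) * N k $$ (l,j)) \<longlonglongrightarrow>
        (\<Sum>l\<in>{0..<dim_row K}. L $$ (i,l) * K $$ (l,j))"
  proof (rule tendsto_sum, rule tendsto_mult)
    fix l assume l: "l \<in> {0..<dim_row K}"
    have i: "i < dim_row L" and j: "j < dim_col K" using ij by auto
    show "(\<lambda>k. M k $$ (i,l)) \<longlonglongrightarrow> L $$ (i,l)"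
      using assms(1) i l assms(3) unfolding econv_def by simp
    show "(\<lambda>k. N k $$ (l,j)) \<longlonglongrightarrow> K $$ (l,j)"
      using assms(2) j l unfolding econv_def by simp
  qed
  moreover have "(M k * N k) $$ (i,j) = (\<Sum>l\<in>{0..<dim_row K}. M k $$ (i,l) * N k $$ (l,j))" for k
  proof -
    have Mk: "M k \<in> carrier_mat (dim_row L) (dim_col L)" and Nk: "N k \<in> carrier_mat (dim_row K) (dim_col K)"
      using assms(1,2) unfolding econv_def by blast+
    have i: "i < dim_row L" and j: "j < dim_col K" using ij by auto
    note dims = carrier_matD[OF Mk] carrier_matD[OF Nk]
    have "(M k * N k) $$ (i,j) = row (M k) i \<bullet> col (N k) j" using dims i j by simp
    also have "\<dots> = (\<Sum>l\<in>{0..<dim_row K}. M k $$ (i,l) * N k $$ (l,j))"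
      unfolding scalar_prod_def using dims i j assms(3) by (intro sum.cong) auto
    finally show ?thesis .
  qed
  moreover have "(L * K) $$ (i,j) = (\<Sum>l\<in>{0..<dim_row K}. L $$ (i,l) * K $$ (l,j))"
  proof -
    have i: "i < dim_row L" and j: "j < dim_col K" using ij by auto
    have "(L * K) $$ (i,j) = row L i \<bullet> col K j" using i j by simp
    also have "\<dots> = (\<Sum>l\<in>{0..<dim_row K}. L $$ (i,l) * K $$ (l,j))"
      unfolding scalar_prod_def using i j assms(3) by (intro sum.cong) auto
    finally show ?thesis .
  qed
  ultimately show "(\<lambda>k. (M k * N k) $$ (i,j)) \<longlonglongrightarrow> (L * K) $$ (i,j)" by simp
qed

lemma econv_add:
  assumes "econv M L" "econv N K" "dim_row L = dim_row K" "dim_col L = dim_col K"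
  shows "econv (\<lambda>k. M k + N k) (L + K)"
  unfolding econv_def
proof (intro conjI allI impI)
  fix k show "M k + N k \<in> carrier_mat (dim_row (L + K)) (dim_col (L + K))"
    using assms unfolding econv_def by (metis add_carrier_mat index_add_mat(2,3))
next
  fix i j assume ij: "i < dim_row (L + K)" "j < dim_col (L + K)"
  have N: "\<And>k. N k \<in> carrier_mat (dim_row K) (dim_col K)" using assms(2) unfolding econv_def by blast
  have "(\<lambda>k. M k $$ (i,j) + N k $$ (i,j)) \<longlonglongrightarrow> L $$ (i,j) + K $$ (i,j)"
    using assms ij unfolding econv_def by (intro tendsto_add) simp_all
  moreover have "(M k + N k) $$ (i,j) = M k $$ (i,j) + N k $$ (i,j)" for k
    using carrier_matD[OF N[of k]] ij by simp
  ultimately show "(\<lambda>k. (M k + N k) $$ (i,j)) \<longlonglongrightarrow> (L + K) $$ (i,j)" using ij by simp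
qed

lemma econv_minus:
  assumes "econv M L" "econv N K" "dim_row L = dim_row K" "dim_col L = dim_col K"
  shows "econv (\<lambda>k. M k - N k) (L - K)"
  unfolding econv_def
proof (intro conjI allI impI)
  fix k show "M k - N k \<in> carrier_mat (dim_row (L - K)) (dim_col (L - K))"
    using assms unfolding econv_def by (metis minus_carrier_mat index_minus_mat(2,3))
next
  fix i j assume ij: "i < dim_row (L - K)" "j < dim_col (L - K)"
  have N: "\<And>k. N k \<in> carrier_mat (dim_row K) (dim_col K)" using assms(2) unfolding econv_def by blast
  have "(\<lambda>k. M k $$ (i,j) - N k $$ (i,j)) \<longlonglongrightarrow> L $$ (i,j) - K $$ (i,j)"
    using assms ij unfolding econv_def by (intro tendsto_diff) simp_all
  moreover have "(M k - N k) $$ (i,j) = M k $$ (i,j) - N k $$ (i,j)" for k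
    using carrier_matD[OF N[of k]] ij by simp
  ultimately show "(\<lambda>k. (M k - N k) $$ (i,j)) \<longlonglongrightarrow> (L - K) $$ (i,j)" using ij by simp
qed

lemma econv_mtrace:
  assumes "econv M L" "dim_row L = dim_col L" shows "(\<lambda>k. mtrace (M k)) \<longlonglongrightarrow> mtrace L"
proof -
  have "(\<lambda>k. \<Sum>i<dim_row L. M k $$ (i,i)) \<longlonglongrightarrow> (\<Sum>i<dim_row L. L $$ (i,i))"
  proof (intro tendsto_sum)
    fix i assume "i \<in> {..<dim_row L}"
    then show "(\<lambda>k. M k $$ (i,i)) \<longlonglongrightarrow> L $$ (i,i)"
      using assms unfolding econv_def by simp
  qed
  then show ?thesis using assms unfolding econv_def mtrace_def carrier_mat_def by auto
qed

lemma mtrace_comm: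
  assumes "P \<in> carrier_mat a b" "Q \<in> carrier_mat b a"
  shows "mtrace (P * Q) = mtrace (Q * P)"
proof -
  have "mtrace (P * Q) = (\<Sum>i<a. \<Sum>k<b. P $$ (i,k) * Q $$ (k,i))"
    using assms unfolding mtrace_def by (auto simp: scalar_prod_def lessThan_atLeast0)
  also have "\<dots> = (\<Sum>k<b. \<Sum>i<a. Q $$ (k,i) * P $$ (i,k))"
    by (subst sum.swap) (simp add: mult.commute)
  also have "\<dots> = mtrace (Q * P)"
    using assms unfolding mtrace_def by (auto simp: scalar_prod_def lessThan_atLeast0)
  finally show ?thesis .
qed

lemma mtrace_add: assumes "P \<in> carrier_mat a a" "Q \<in> carrier_mat a a"
  shows "mtrace (P + Q) = mtrace P + mtrace Q" "mtrace (P - Q) = mtrace P - mtrace Q"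
  using assms unfolding mtrace_def by (auto simp: sum.distrib sum_subtractf)


definition qf :: "nat \<Rightarrow> (nat \<Rightarrow> nat \<Rightarrow> real) \<Rightarrow> (nat \<Rightarrow> real) \<Rightarrow> (nat \<Rightarrow> real) \<Rightarrow> real" where
  "qf d A f g = (\<Sum>i<d. \<Sum>j<d. f i * A i j * g j)"

lemma qf_add_left: "qf d A (\<lambda>i. f i + g i) h = qf d A f h + qf d A g h"
  unfolding qf_def by (simp add: algebra_simps sum.distrib)
lemma qf_add_right: "qf d A h (\<lambda>i. f i + g i) = qf d A h f + qf d A h g"
  unfolding qf_def by (simp add: algebra_simps sum.distrib)
lemma qf_scale_left: "qf d A (\<lambda>i. c * f i) h = c * qf d A f h"
  unfolding qf_def by (simp add: algebra_simps sum_distrib_left)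
lemma qf_scale_right: "qf d A h (\<lambda>i. c * f i) = c * qf d A h f"
  unfolding qf_def by (simp add: algebra_simps sum_distrib_left)
lemma qf_diff_mat: "qf d (\<lambda>i j. A i j - B i j) f g = qf d A f g - qf d B f g"
  unfolding qf_def by (simp add: algebra_simps sum_subtractf)
lemma qf_rank1: "qf d (\<lambda>i j. u i * u j) f g = (\<Sum>i<d. f i * u i) * (\<Sum>j<d. u j * g j)"
  unfolding qf_def sum_product by (simp add: mult_ac)
lemma qf_delta_left: assumes "p < d" shows "qf d A (\<lambda>i. if i = p then 1 else 0) h = (\<Sum>j<d. A p j * h j)"
proof -
  have "\<And>i. (\<Sum>j<d. (if i = p then 1 else 0) * A i j * h j) = (if i = p then (\<Sum>j<d. A p j * h j) else 0)"
    by auto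
  then show ?thesis unfolding qf_def using assms by (simp add: sum.delta)
qed
lemma qf_delta_right: assumes "p < d" shows "qf d A h (\<lambda>i. if i = p then 1 else 0) = (\<Sum>i<d. h i * A i p)"
proof -
  have "\<And>i. (\<Sum>j<d. h i * A i j * (if j = p then 1 else 0)) = (\<Sum>j<d. if j = p then h i * A i p else 0)"
    by (rule sum.cong) auto
  then show ?thesis unfolding qf_def using assms by (simp add: sum.delta)
qed
lemma qf_delta2: "p < d \<Longrightarrow> q < d \<Longrightarrow> qf d A (\<lambda>i. if i = p then 1 else 0) (\<lambda>i. if i = q then 1 else 0) = A p q"
  by (simp add: qf_delta_left if_distrib cong: if_cong)

lemma qf_two:
  assumes "p < d" "q < d"
  shows "qf d A (\<lambda>i. a * (if i = p then 1 else 0) + b * (if i = q then 1 else 0))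
                 (\<lambda>i. a * (if i = p then 1 else 0) + b * (if i = q then 1 else 0))
       = a*a * A p p + a*b * (A p q + A q p) + b*b * A q q"
  using assms by (simp add: qf_add_left qf_add_right qf_scale_left qf_scale_right qf_delta2 algebra_simps)


definition delta :: "nat \<Rightarrow> nat \<Rightarrow> real" where "delta p i = (if i = p then 1 else 0)"

lemma psd_diag: assumes "\<forall>f. 0 \<le> qf d A f f" "p < d" shows "0 \<le> A p p"
  using assms(1)[rule_format, of "\<lambda>i. if i = p then 1 else 0"] qf_delta2[OF assms(2,2)] by simp

lemma psd_two: assumes "\<forall>f. 0 \<le> qf d A f f" "p < d" "q < d"
  shows "0 \<le> a*a * A p p + a*b * (A p q + A q p) + b*b * A q q"
  using assms(1)[rule_format, of "\<lambda>i. a * (if i = p then 1 else 0) + b * (if i = q then 1 else 0)"]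
    qf_two[OF assms(2,3), of A a b] by simp

lemma psd_offdiag: assumes "\<forall>i<d. \<forall>j<d. A i j = A j i" "\<forall>f. 0 \<le> qf d A f f" "p < d" "q < d"
  shows "2 * \<bar>A p q\<bar> \<le> A p p + A q q"
proof -
  have "0 \<le> 1*1 * A p p + 1*1 * (A p q + A q p) + 1*1 * A q q" using psd_two[OF assms(2-4)] .
  moreover have "0 \<le> 1*1 * A p p + 1*(-1) * (A p q + A q p) + (-1)*(-1) * A q q" using psd_two[OF assms(2-4)] .
  moreover have "A q p = A p q" using assms(1,3,4) by auto
  ultimately have h1: "0 \<le> A p p + 2 * A p q + A q q" and h2: "0 \<le> A p p - 2 * A p q + A q q" by simp_all
  show ?thesis using h1 h2 by (cases "0 \<le> A p q") (auto simp: abs_of_nonneg abs_of_neg)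
qed

lemma psd_zero_diag: assumes "\<forall>i<d. \<forall>j<d. A i j = A j i" "\<forall>f. 0 \<le> qf d A f f" "p < d" "q < d"
  and "A p p = 0" shows "A p q = 0"
proof (rule ccontr)
  assume c: "A p q \<noteq> 0"
  define a where "a = - (A q q + 1) / (2 * A p q)"
  have "0 \<le> a*a * A p p + a*1 * (A p q + A q p) + 1*1 * A q q" using psd_two[OF assms(2-4)] .
  moreover have "A q p = A p q" using assms(1,3,4) by auto
  ultimately have "0 \<le> a * (2 * A p q) + A q q" using assms(5) by (simp add: algebra_simps)
  moreover have "a * (2 * A p q) = - (A q q + 1)" using c unfolding a_def by simp
  ultimately show False by linarith
qed

lemma psd_decomp:
  assumes "\<forall>i<d. \<forall>j<d. A i j = A j i" "\<forall>f. 0 \<le> qf d A f f"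
  shows "\<exists>ws. \<forall>i<d. \<forall>j<d. A i j = (\<Sum>w\<leftarrow>ws. w i * w j)"
  using assms
proof (induction "card {i. i<d \<and> A i i \<noteq> 0}" arbitrary: A rule: less_induct)
  case less
  show ?case
  proof (cases "\<exists>p<d. A p p \<noteq> 0")
    case False
    then have "\<forall>i<d. \<forall>j<d. A i j = 0" using psd_zero_diag[OF less.prems] by blast
    then show ?thesis by (intro exI[of _ "[]"]) simp
  next
    case True
    then obtain p where p: "p<d" "A p p \<noteq> 0" by blast
    have apos: "A p p > 0" using psd_diag[OF less.prems(2) p(1)] p(2) by simp
    define w where "w i = A i p / sqrt (A p p)" for i
    define B where "B i j = A i j - w i * w j" for i j
    have sq: "sqrt (A p p) * sqrt (A p p) = A p p" using apos by simp
    have ww: "w i * w j = A i p * A j p / A p p" for i j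
      unfolding w_def times_divide_times_eq sq ..
    have symB: "\<forall>i<d. \<forall>j<d. B i j = B j i" using less.prems(1) by (simp add: B_def ww mult.commute)
    have psdB: "\<forall>f. 0 \<le> qf d B f f"
    proof
      fix f
      define s where "s = (\<Sum>i<d. f i * A i p)"
      define t where "t = s / A p p"
      define c where "c = - t"
      define g where "g = (\<lambda>i. f i + c * (if i = p then 1 else 0))"
      have s2: "(\<Sum>j<d. A p j * f j) = s" unfolding s_def using less.prems(1) p(1)
        by (intro sum.cong) (auto simp: mult.commute)
      have "qf d A g g = qf d A f f + c * qf d A (\<lambda>i. if i = p then 1 else 0) f
           + c * qf d A f (\<lambda>i. if i = p then 1 else 0) + c * c * A p p"
        unfolding g_def qf_add_left qf_add_right qf_scale_left qf_scale_right qf_delta2[OF p(1) p(1)]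
        by (simp add: algebra_simps)
      also have "\<dots> = qf d A f f - s * s / A p p"
        unfolding qf_delta_left[OF p(1)] qf_delta_right[OF p(1)] s2 s_def[symmetric] c_def t_def
        using apos by (simp add: field_simps)
      finally have 1: "qf d A g g = qf d A f f - s * s / A p p" .
      have "qf d B f f = qf d A f f - qf d (\<lambda>i j. w i * w j) f f"
        unfolding B_def by (rule qf_diff_mat)
      also have "\<dots> = qf d A f f - (\<Sum>i<d. f i * w i) * (\<Sum>j<d. w j * f j)" by (simp add: qf_rank1)
      also have "(\<Sum>i<d. f i * w i) = s / sqrt (A p p)"
        unfolding w_def s_def by (simp add: sum_divide_distrib)
      also have "(\<Sum>j<d. w j * f j) = s / sqrt (A p p)"
        unfolding w_def s_def by (simp add: sum_divide_distrib mult.commute)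
      also have "s / sqrt (A p p) * (s / sqrt (A p p)) = s * s / A p p"
        unfolding times_divide_times_eq sq ..
      finally show "0 \<le> qf d B f f" using 1 less.prems(2) by metis
    qed
    have sub: "{i. i<d \<and> B i i \<noteq> 0} \<subset> {i. i<d \<and> A i i \<noteq> 0}"
    proof
      show "{i. i<d \<and> B i i \<noteq> 0} \<subseteq> {i. i<d \<and> A i i \<noteq> 0}"
      proof safe
        fix i assume i: "i < d" "B i i \<noteq> 0" "A i i = 0"
        have "A i p = 0" using psd_zero_diag[OF less.prems i(1) p(1) i(3)] .
        then show False using i by (simp add: B_def ww)
      qed
      have "B p p = 0" using apos by (simp add: B_def ww)
      then show "{i. i<d \<and> B i i \<noteq> 0} \<noteq> {i. i<d \<and> A i i \<noteq> 0}" using p by blast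
    qed
    have "card {i. i<d \<and> B i i \<noteq> 0} < card {i. i<d \<and> A i i \<noteq> 0}"
      by (rule psubset_card_mono[OF _ sub]) simp
    then obtain ws where ws: "\<forall>i<d. \<forall>j<d. B i j = (\<Sum>w\<leftarrow>ws. w i * w j)"
      using less.hyps[OF _ symB psdB] by blast
    have "\<forall>i<d. \<forall>j<d. A i j = (\<Sum>v\<leftarrow>w # ws. v i * v j)"
    proof (intro allI impI)
      fix i j assume "i < d" "j < d"
      then have "A i j - w i * w j = (\<Sum>v\<leftarrow>ws. v i * v j)" using ws by (simp add: B_def)
      then show "A i j = (\<Sum>v\<leftarrow>w # ws. v i * v j)" by simp
    qed
    then show ?thesis by blast
  qed
qed

lemma sum_list_swap2: fixes ws :: "(nat \<Rightarrow> real) list" and C :: "nat \<Rightarrow> nat \<Rightarrow> real" shows "(\<Sum>i<d. \<Sum>j<d. (\<Sum>w\<leftarrow>ws. w i * w j) * C i j) = (\<Sum>w\<leftarrow>ws. \<Sum>i<d. \<Sum>j<d. w i * w j * C i j)"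
proof (induction ws)
  case Nil show ?case by simp
next
  case (Cons a ws)
  have "(\<Sum>i<d. \<Sum>j<d. (a i * a j + (\<Sum>w\<leftarrow>ws. w i * w j)) * C i j) = (\<Sum>i<d. \<Sum>j<d. a i * a j * C i j) + (\<Sum>i<d. \<Sum>j<d. (\<Sum>w\<leftarrow>ws. w i * w j) * C i j)"
    by (simp add: distrib_right sum.distrib)
  then show ?case using Cons by simp
qed

lemma sum_list_swap1: fixes ws :: "(nat \<Rightarrow> real) list" shows "(\<Sum>i<d. (\<Sum>w\<leftarrow>ws. w i * w i)) = (\<Sum>w\<leftarrow>ws. \<Sum>i<d. w i * w i)"
  by (induction ws) (simp_all add: sum.distrib)

lemma trace_bound:
  assumes A: "\<forall>i<d. \<forall>j<d. A i j = (\<Sum>w\<leftarrow>ws. w i * w j)"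
    and S: "\<forall>i<d. \<forall>j<d. S i j = S j i" and eps: "\<forall>f. eps * (\<Sum>i<d. f i * f i) \<le> qf d S f f"
  shows "eps * (\<Sum>i<d. A i i) \<le> (\<Sum>i<d. \<Sum>j<d. A i j * S j i)"
proof -
  have "(\<Sum>i<d. \<Sum>j<d. A i j * S j i) = (\<Sum>i<d. \<Sum>j<d. (\<Sum>w\<leftarrow>ws. w i * w j) * S j i)"
    using A by simp
  also have "\<dots> = (\<Sum>w\<leftarrow>ws. \<Sum>i<d. \<Sum>j<d. w i * w j * S j i)" by (rule sum_list_swap2)
  also have "\<dots> = (\<Sum>w\<leftarrow>ws. qf d S w w)"
    unfolding qf_def using S by (intro arg_cong[where f=sum_list] map_cong refl sum.cong) (auto simp: mult_ac)
  finally have 1: "(\<Sum>i<d. \<Sum>j<d. A i j * S j i) = (\<Sum>w\<leftarrow>ws. qf d S w w)" .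
  have "eps * (\<Sum>i<d. A i i) = eps * (\<Sum>w\<leftarrow>ws. \<Sum>i<d. w i * w i)"
    using A by (simp add: sum_list_swap1[symmetric])
  also have "\<dots> = (\<Sum>w\<leftarrow>ws. eps * (\<Sum>i<d. w i * w i))" by (simp add: sum_list_const_mult)
  also have "\<dots> \<le> (\<Sum>w\<leftarrow>ws. qf d S w w)" using eps by (intro sum_list_mono) auto
  finally show ?thesis using 1 by simp
qed


lemma posdef_qf_eq:
  assumes M: "M \<in> carrier_mat d d"
  shows "vec d f \<bullet> (M *\<^sub>v vec d f) = qf d (\<lambda>i j. M $$ (i,j)) f f"
proof -
  have "vec d f \<bullet> (M *\<^sub>v vec d f) = (\<Sum>i\<in>{0..<d}. f i * (row M i \<bullet> vec d f))"
    by (subst scalar_prod_def) (use M in \<open>auto intro: sum.cong\<close>)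
  also have "\<dots> = (\<Sum>i<d. f i * (\<Sum>j<d. M $$ (i,j) * f j))"
  proof -
    have inner: "row M i \<bullet> vec d f = (\<Sum>j<d. M $$ (i,j) * f j)" if "i < d" for i
      unfolding scalar_prod_def lessThan_atLeast0 using M that by (intro sum.cong) auto
    show ?thesis unfolding atLeast0LessThan using inner by (intro sum.cong) auto
  qed
  also have "\<dots> = qf d (\<lambda>i j. M $$ (i,j)) f f"
    unfolding qf_def by (simp add: sum_distrib_left mult_ac)
  finally show ?thesis .
qed

lemma posdef_qf:
  assumes "posdef d M" "i0 < d" "f i0 \<noteq> 0"
  shows "0 < qf d (\<lambda>i j. M $$ (i,j)) f f"
proof -
  have M: "M \<in> carrier_mat d d" using assms(1) unfolding posdef_def by blast
  have "vec d f \<noteq> 0\<^sub>v d"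
  proof
    assume "vec d f = 0\<^sub>v d"
    then have "vec d f $ i0 = 0\<^sub>v d $ i0" by simp
    then show False using assms(2,3) by simp
  qed
  then have "0 < vec d f \<bullet> (M *\<^sub>v vec d f)" using assms(1) unfolding posdef_def by auto
  then show ?thesis using posdef_qf_eq[OF M] by simp
qed

lemma posdef_psd:
  assumes "posdef d M" shows "0 \<le> qf d (\<lambda>i j. M $$ (i,j)) f f"
proof (cases "\<exists>i<d. f i \<noteq> 0")
  case True then show ?thesis using posdef_qf[OF assms] by (meson less_imp_le)
next
  case False then show ?thesis unfolding qf_def by simp
qed

lemma posdef_sym:
  assumes "posdef d M" shows "\<forall>i<d. \<forall>j<d. M $$ (i,j) = M $$ (j,i)"
proof (intro allI impI)
  fix i j assume ij: "i < d" "j < d"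
  have M: "M \<in> carrier_mat d d" "transpose_mat M = M" using assms unfolding posdef_def by auto
  have "M $$ (i,j) = transpose_mat M $$ (i,j)" using M by simp
  also have "\<dots> = M $$ (j,i)" by (metis M(1) carrier_matD index_transpose_mat(1) ij)
  finally show "M $$ (i,j) = M $$ (j,i)" .
qed

lemma sum_sq_nonneg: "0 \<le> (\<Sum>i<d. f i * (f i::real))" by (intro sum_nonneg) auto

lemma posdef_eps:
  assumes "posdef d M"
  shows "\<exists>eps>0. \<forall>f. eps * (\<Sum>i<d. f i * f i) \<le> qf d (\<lambda>i j. M $$ (i,j)) f f"
proof (rule ccontr)
  define Q where "Q f = qf d (\<lambda>i j. M $$ (i,j)) f f" for f
  define nr where "nr f = (\<Sum>i<d. f i * (f i::real))" for f
  assume "\<not> ?thesis"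
  then have neg: "\<forall>eps>0. \<exists>f. Q f < eps * nr f" unfolding Q_def nr_def by (auto simp: not_le)
  have "\<exists>g. nr g = 1 \<and> Q g < inverse (real (Suc k))" for k
  proof -
    obtain f where f: "Q f < inverse (real (Suc k)) * nr f" using neg by force
    have "nr f \<noteq> 0"
    proof
      assume "nr f = 0"
      then have "\<forall>i\<in>{..<d}. f i * f i = 0" unfolding nr_def by (subst (asm) sum_nonneg_eq_0_iff) auto
      then have "Q f = 0" unfolding Q_def qf_def by simp
      then show False using f \<open>nr f = 0\<close> by simp
    qed
    then have np: "nr f > 0" using sum_sq_nonneg[where d=d and f=f] unfolding nr_def by linarith
    define c where "c = 1 / sqrt (nr f)"
    have cc: "c * c = 1 / nr f" unfolding c_def using np by (simp add: field_simps)
    have "nr (\<lambda>i. c * f i) = c * c * nr f" unfolding nr_def by (simp add: sum_distrib_left mult_ac)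
    also have "\<dots> = 1" using cc np by simp
    finally have 1: "nr (\<lambda>i. c * f i) = 1" .
    have "Q (\<lambda>i. c * f i) = c * c * Q f" unfolding Q_def qf_scale_left qf_scale_right by simp
    also have "\<dots> < c * c * (inverse (real (Suc k)) * nr f)"
      using f cc np by (intro mult_strict_left_mono) auto
    also have "\<dots> = inverse (real (Suc k))" using cc np by simp
    finally show ?thesis using 1 by blast
  qed
  then obtain F where F: "\<And>k. nr (F k) = 1" "\<And>k. Q (F k) < inverse (real (Suc k))" by metis
  have bnd: "\<bar>F k i\<bar> \<le> 1" if "i \<in> {..<d}" for k i
  proof -
    have "F k i * F k i \<le> nr (F k)" unfolding nr_def
      by (rule member_le_sum[where f="\<lambda>i. F k i * F k i"]) (use that in auto)
    then have "F k i * F k i \<le> 1" using F(1) by simp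
    then show ?thesis by (metis abs_le_square_iff abs_one mult_1 power2_eq_square)
  qed
  obtain r where r: "strict_mono r" "\<forall>i\<in>{..<d}. convergent (\<lambda>k. F (r k) i)"
    using bw_finite[where I="{..<d}" and f=F and C=1] bnd by blast
  define h where "h i = lim (\<lambda>k. F (r k) i)" for i
  have hl: "(\<lambda>k. F (r k) i) \<longlonglongrightarrow> h i" if "i < d" for i
    using r(2) that unfolding h_def by (simp add: convergent_LIMSEQ_iff)
  have "(\<lambda>k. nr (F (r k))) \<longlonglongrightarrow> nr h"
    unfolding nr_def by (intro tendsto_sum tendsto_mult hl) auto
  then have nh: "nr h = 1" using F(1) LIMSEQ_unique by (simp add: tendsto_const LIMSEQ_const_iff)
  have "(\<lambda>k. Q (F (r k))) \<longlonglongrightarrow> Q h"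
    unfolding Q_def qf_def by (intro tendsto_sum tendsto_mult hl tendsto_const) auto
  moreover have "(\<lambda>k. inverse (real (Suc k))) \<longlonglongrightarrow> 0" by (rule LIMSEQ_inverse_real_of_nat)
  moreover have "Q (F (r k)) \<le> inverse (real (Suc k))" for k
  proof -
    have "k \<le> r k" using seq_suble[OF r(1)] by simp
    then have "inverse (real (Suc (r k))) \<le> inverse (real (Suc k))" by (simp add: field_simps)
    then show ?thesis using F(2)[of "r k"] by linarith
  qed
  ultimately have "Q h \<le> 0" by (intro LIMSEQ_le) auto
  moreover obtain i0 where "i0 < d" "h i0 \<noteq> 0"
  proof -
    have "nr h \<noteq> 0" using nh by simp
    then show ?thesis using that unfolding nr_def by (metis (no_types, lifting) lessThan_iff mult_zero_left sum.neutral)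
  qed
  ultimately show False using posdef_qf[OF assms, of i0 h] unfolding Q_def by simp
qed

lemma det_bound:
  fixes A :: "real mat"
  assumes A: "A \<in> carrier_mat d d" and t: "0 \<le> t" and b: "\<forall>i<d. \<forall>j<d. \<bar>A $$ (i,j)\<bar> \<le> t"
  shows "\<bar>det A\<bar> \<le> fact d * t ^ d"
proof -
  have "\<bar>det A\<bar> \<le> (\<Sum>p | p permutes {0..<d}. \<bar>of_int (sign p) * (\<Prod>i = 0..<d. A $$ (i, p i))\<bar>)"
    unfolding det_def'[OF A] by (rule sum_abs)
  also have "\<dots> \<le> (\<Sum>p | p permutes {0..<d}. t ^ d)"
  proof (rule sum_mono)
    fix p assume "p \<in> {p. p permutes {0..<d}}"
    then have p: "p permutes {0..<d}" by simp
    have sg: "\<bar>real_of_int (sign p)\<bar> = 1" by (metis abs_sign of_int_abs of_int_1)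
    have "\<bar>of_int (sign p) * (\<Prod>i = 0..<d. A $$ (i, p i))\<bar> = (\<Prod>i = 0..<d. \<bar>A $$ (i, p i)\<bar>)"
      by (simp add: abs_mult abs_prod sg)
    also have "\<dots> \<le> (\<Prod>i = 0..<d. t)"
    proof (rule prod_mono)
      fix i assume i: "i \<in> {0..<d}"
      then have "p i \<in> {0..<d}" using permutes_in_image[OF p] by simp
      then show "0 \<le> \<bar>A $$ (i, p i)\<bar> \<and> \<bar>A $$ (i, p i)\<bar> \<le> t" using b i by auto
    qed
    finally show "\<bar>of_int (sign p) * (\<Prod>i = 0..<d. A $$ (i, p i))\<bar> \<le> t ^ d" by simp
  qed
  also have "\<dots> = fact d * t ^ d"
  proof -
    have "card {p. p permutes {0..<d}} = fact d"
      using card_permutations by (metis card_atLeastLessThan diff_zero finite_atLeastLessThan)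
    then show ?thesis by simp
  qed
  finally show ?thesis .
qed


lemma sym_entry: assumes "M \<in> carrier_mat d d" "transpose_mat M = M" "i < d" "j < d"
  shows "M $$ (j,i) = M $$ (i,j)"
  by (metis assms carrier_matD index_transpose_mat(1))

lemma mtrace_smult: assumes "M \<in> carrier_mat d d" shows "mtrace (c \<cdot>\<^sub>m M) = c * mtrace M"
  using assms unfolding mtrace_def by (simp add: sum_distrib_left)

lemma transpose_smult': "transpose_mat (c \<cdot>\<^sub>m M) = c \<cdot>\<^sub>m transpose_mat M"
  by (rule eq_matI) auto

lemma sqs_entry: fixes M :: "real mat" assumes "i < a" "j < b"
  shows "M $$ (i,j) * M $$ (i,j) \<le> (\<Sum>i<a. \<Sum>j<b. M $$ (i,j) * M $$ (i,j))"
proof -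
  have "M $$ (i,j) * M $$ (i,j) \<le> (\<Sum>j<b. M $$ (i,j) * M $$ (i,j))"
    by (rule member_le_sum[where f="\<lambda>j. M $$ (i,j) * M $$ (i,j)"]) (use assms in auto)
  also have "\<dots> \<le> (\<Sum>i<a. \<Sum>j<b. M $$ (i,j) * M $$ (i,j))"
    by (rule member_le_sum[where f="\<lambda>i. \<Sum>j<b. M $$ (i,j) * M $$ (i,j)"]) (use assms in \<open>auto intro: sum_nonneg\<close>)
  finally show ?thesis .
qed

lemma fro_entry: assumes "M \<in> carrier_mat a b" "i < a" "j < b"
  shows "\<bar>M $$ (i,j)\<bar> \<le> fro M"
proof -
  have "M $$ (i,j) * M $$ (i,j) \<le> (\<Sum>i<a. \<Sum>j<b. M $$ (i,j) * M $$ (i,j))" by (rule sqs_entry) (use assms in auto)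
  then have "sqrt (M $$ (i,j) * M $$ (i,j)) \<le> sqrt (\<Sum>i<a. \<Sum>j<b. M $$ (i,j) * M $$ (i,j))"
    by (rule real_sqrt_le_mono)
  moreover have "fro M = sqrt (\<Sum>i<a. \<Sum>j<b. M $$ (i,j) * M $$ (i,j))"
    using assms(1) unfolding fro_def by (simp add: power2_eq_square)
  ultimately show ?thesis by (simp add: real_sqrt_abs2)
qed

lemma fro_smult: "fro (c \<cdot>\<^sub>m M) = \<bar>c\<bar> * fro M"
proof -
  have "(\<Sum>i<dim_row M. \<Sum>j<dim_col M. ((c \<cdot>\<^sub>m M) $$ (i,j))^2) = c^2 * (\<Sum>i<dim_row M. \<Sum>j<dim_col M. (M $$ (i,j))^2)"
    by (simp add: sum_distrib_left power_mult_distrib)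
  then show ?thesis unfolding fro_def by (simp add: real_sqrt_mult)
qed

lemma mtrace_sq: assumes "M \<in> carrier_mat d d" "transpose_mat M = M"
  shows "mtrace (M * M) = (\<Sum>i<d. \<Sum>j<d. M $$ (i,j) * M $$ (i,j))"
proof -
  have "mtrace (M * M) = (\<Sum>i<d. \<Sum>j<d. M $$ (i,j) * M $$ (j,i))"
    using assms(1) unfolding mtrace_def by (auto simp: scalar_prod_def lessThan_atLeast0 intro!: sum.cong)
  also have "\<dots> = (\<Sum>i<d. \<Sum>j<d. M $$ (i,j) * M $$ (i,j))"
    using sym_entry[OF assms] by (intro sum.cong refl) auto
  finally show ?thesis .
qed

lemma pinner_smult_left:
  assumes "fst X \<in> carrier_mat a a" "snd X \<in> carrier_mat b b" "fst Z \<in> carrier_mat a a" "snd Z \<in> carrier_mat b b"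
  shows "pinner (c \<cdot>\<^sub>m fst X, c \<cdot>\<^sub>m snd X) Z = c * pinner X Z"
  unfolding pinner_def using assms
  by (simp add: mult_smult_assoc_mat[of _ a a] mult_smult_assoc_mat[of _ b b] mtrace_smult[of _ a] mtrace_smult[of _ b] distrib_left)

lemma pinner_smult_both:
  assumes "fst X \<in> carrier_mat a a" "snd X \<in> carrier_mat b b"
  shows "pinner (c \<cdot>\<^sub>m fst X, c \<cdot>\<^sub>m snd X) (c \<cdot>\<^sub>m fst X, c \<cdot>\<^sub>m snd X) = c * c * pinner X X"
  unfolding pinner_def using assms
  by (simp add: mult_smult_assoc_mat[of _ a a] mult_smult_assoc_mat[of _ b b] mult_smult_distrib[of _ a a]
     mult_smult_distrib[of _ b b] mtrace_smult[of _ a] mtrace_smult[of _ b] distrib_left)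


definition AoG :: "real mat \<Rightarrow> real mat \<Rightarrow> real mat \<times> real mat \<Rightarrow> real mat" where
  "AoG E U X = E * fst X * transpose_mat E + U * snd X * transpose_mat U - snd X"

definition SWG :: "nat \<Rightarrow> nat \<Rightarrow> real mat \<Rightarrow> real mat \<Rightarrow> real mat \<times> real mat \<Rightarrow> bool" where
  "SWG D1 D2 E U X \<longleftrightarrow> fst X \<in> carrier_mat D1 D1 \<and> transpose_mat (fst X) = fst X \<and>
     snd X \<in> carrier_mat D2 D2 \<and> transpose_mat (snd X) = snd X \<and>
     (\<forall>Y. fst Y \<in> carrier_mat D1 D1 \<and> transpose_mat (fst Y) = fst Y \<and>
          snd Y \<in> carrier_mat D2 D2 \<and> transpose_mat (snd Y) = snd Y \<and> AoG E U Y = 0\<^sub>m D2 D2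
          \<longrightarrow> pinner X Y = 0)"

lemma AoG_smult:
  assumes E: "E \<in> carrier_mat D2 D1" and U: "U \<in> carrier_mat D2 D2"
    and L: "L \<in> carrier_mat D1 D1" and T: "T \<in> carrier_mat D2 D2"
  shows "AoG E U (c \<cdot>\<^sub>m L, c \<cdot>\<^sub>m T) = c \<cdot>\<^sub>m AoG E U (L, T)"
proof -
  have 1: "E * (c \<cdot>\<^sub>m L) * transpose_mat E = c \<cdot>\<^sub>m (E * L * transpose_mat E)"
    using E L by (simp add: mult_smult_distrib[of _ D2 D1] mult_smult_assoc_mat[of _ D2 D1])
  have 2: "U * (c \<cdot>\<^sub>m T) * transpose_mat U = c \<cdot>\<^sub>m (U * T * transpose_mat U)"
    using U T by (simp add: mult_smult_distrib[of _ D2 D2] mult_smult_assoc_mat[of _ D2 D2])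
  show ?thesis unfolding AoG_def fst_conv snd_conv 1 2
    using E U L T by (intro eq_matI) (auto simp: algebra_simps)
qed

lemma AoG_carrier:
  assumes E: "E \<in> carrier_mat D2 D1" and U: "U \<in> carrier_mat D2 D2"
    and L: "fst X \<in> carrier_mat D1 D1" and T: "snd X \<in> carrier_mat D2 D2"
  shows "AoG E U X \<in> carrier_mat D2 D2"
  unfolding AoG_def using assms by auto

lemma econv_AoG:
  assumes E: "E \<in> carrier_mat D2 D1" and U: "U \<in> carrier_mat D2 D2"
    and L: "econv Lk L" "L \<in> carrier_mat D1 D1" and T: "econv Tk T" "T \<in> carrier_mat D2 D2"
  shows "econv (\<lambda>k. AoG E U (Lk k, Tk k)) (AoG E U (L, T))"
  unfolding AoG_def fst_conv snd_conv
  using assms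
  by (intro econv_minus econv_add econv_mult econv_const) auto

lemma econv_pinner:
  assumes "econv L1 A1" "econv L2 A2" "econv T1 B1" "econv T2 B2"
    "A1 \<in> carrier_mat D1 D1" "A2 \<in> carrier_mat D1 D1" "B1 \<in> carrier_mat D2 D2" "B2 \<in> carrier_mat D2 D2"
  shows "(\<lambda>k. pinner (L1 k, T1 k) (L2 k, T2 k)) \<longlonglongrightarrow> pinner (A1, B1) (A2, B2)"
  unfolding pinner_def fst_conv snd_conv
  using assms by (intro tendsto_add econv_mtrace econv_mult) auto

lemma lower_bound:
  assumes E: "E \<in> carrier_mat D2 D1" and U: "U \<in> carrier_mat D2 D2"
  shows "\<exists>c>0. \<forall>X. SWG D1 D2 E U X \<longrightarrow> c * pnorm X \<le> fro (AoG E U X)"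
proof (rule ccontr)
  assume "\<not> ?thesis"
  then have neg: "\<forall>c>0. \<exists>X. SWG D1 D2 E U X \<and> fro (AoG E U X) < c * pnorm X" by (auto simp: not_le)
  have "\<exists>Y. SWG D1 D2 E U Y \<and> pinner Y Y = 1 \<and> fro (AoG E U Y) < inverse (real (Suc k))" for k
  proof -
    obtain X where X: "SWG D1 D2 E U X" "fro (AoG E U X) < inverse (real (Suc k)) * pnorm X"
      using neg by force
    obtain L T where LT: "X = (L, T)" by (cases X)
    have Lc: "L \<in> carrier_mat D1 D1" "transpose_mat L = L" and Tc: "T \<in> carrier_mat D2 D2" "transpose_mat T = T"
      using X(1) unfolding SWG_def LT by auto
    have "0 \<le> fro (AoG E U X)" unfolding fro_def by (auto intro!: sum_nonneg)
    then have "0 < inverse (real (Suc k)) * pnorm X" using X(2) by linarith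
    then have pn: "0 < pnorm X" by (simp add: zero_less_mult_iff)
    then have pp: "0 < pinner X X" unfolding pnorm_def by simp
    have pnsq: "pnorm X * pnorm X = pinner X X" unfolding pnorm_def using pp by simp
    define a where "a = 1 / pnorm X"
    have apos: "a > 0" unfolding a_def using pn by simp
    define Y where "Y = (a \<cdot>\<^sub>m L, a \<cdot>\<^sub>m T)"
    have SWY: "SWG D1 D2 E U Y"
      unfolding SWG_def
    proof (intro conjI allI impI)
      show "fst Y \<in> carrier_mat D1 D1" "snd Y \<in> carrier_mat D2 D2" unfolding Y_def using Lc Tc by auto
      show "transpose_mat (fst Y) = fst Y" "transpose_mat (snd Y) = snd Y"
        unfolding Y_def using Lc Tc by (auto simp: transpose_smult')
      fix Z assume Z: "fst Z \<in> carrier_mat D1 D1 \<and> transpose_mat (fst Z) = fst Z \<and>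
          snd Z \<in> carrier_mat D2 D2 \<and> transpose_mat (snd Z) = snd Z \<and> AoG E U Z = 0\<^sub>m D2 D2"
      then have "pinner X Z = 0" using X(1) unfolding SWG_def by blast
      moreover have "pinner Y Z = a * pinner X Z"
        unfolding Y_def using pinner_smult_left[of "(L,T)" D1 D2 Z a] Lc Tc Z LT by simp
      ultimately show "pinner Y Z = 0" by simp
    qed
    have "pinner Y Y = a * a * pinner X X"
      unfolding Y_def using pinner_smult_both[of "(L,T)" D1 D2 a] Lc Tc LT by simp
    also have "\<dots> = 1" unfolding a_def using pnsq pn pp by (simp add: field_simps)
    finally have p1: "pinner Y Y = 1" .
    have "AoG E U Y = a \<cdot>\<^sub>m AoG E U X" unfolding Y_def LT using AoG_smult[OF E U Lc(1) Tc(1)] by simp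
    then have "fro (AoG E U Y) = a * fro (AoG E U X)" using apos by (simp add: fro_smult)
    also have "\<dots> < a * (inverse (real (Suc k)) * pnorm X)" using X(2) apos by simp
    also have "\<dots> = inverse (real (Suc k))" unfolding a_def using pn by simp
    finally show ?thesis using SWY p1 by blast
  qed
  then obtain F where F: "\<And>k. SWG D1 D2 E U (F k)" "\<And>k. pinner (F k) (F k) = 1"
    "\<And>k. fro (AoG E U (F k)) < inverse (real (Suc k))" by metis
  have Fc: "fst (F k) \<in> carrier_mat D1 D1" "transpose_mat (fst (F k)) = fst (F k)"
    "snd (F k) \<in> carrier_mat D2 D2" "transpose_mat (snd (F k)) = snd (F k)" for k
    using F(1)[of k] unfolding SWG_def by auto
  have psum: "(\<Sum>i<D1. \<Sum>j<D1. fst (F k) $$ (i,j) * fst (F k) $$ (i,j)) + (\<Sum>i<D2. \<Sum>j<D2. snd (F k) $$ (i,j) * snd (F k) $$ (i,j)) = 1" for k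
    using F(2)[of k] unfolding pinner_def mtrace_sq[OF Fc(1,2)] mtrace_sq[OF Fc(3,4)] .
  have nn1: "0 \<le> (\<Sum>i<D1. \<Sum>j<D1. fst (F k) $$ (i,j) * fst (F k) $$ (i,j))" for k by (intro sum_nonneg) auto
  have nn2: "0 \<le> (\<Sum>i<D2. \<Sum>j<D2. snd (F k) $$ (i,j) * snd (F k) $$ (i,j))" for k by (intro sum_nonneg) auto
  have b1: "\<bar>fst (F k) $$ ij\<bar> \<le> 1" if ijin: "ij \<in> {..<D1} \<times> {..<D1}" for k ij
  proof -
    obtain i j where ij: "ij = (i,j)" "i < D1" "j < D1" using ijin by (cases ij) auto
    have "fst (F k) $$ (i,j) * fst (F k) $$ (i,j) \<le> 1"
      using sqs_entry[OF ij(2,3), of "fst (F k)"] psum[of k] nn2[of k] by linarith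
    then show ?thesis unfolding ij(1) by (metis abs_le_square_iff abs_one mult_1 power2_eq_square)
  qed
  have b2: "\<bar>snd (F k) $$ ij\<bar> \<le> 1" if ijin: "ij \<in> {..<D2} \<times> {..<D2}" for k ij
  proof -
    obtain i j where ij: "ij = (i,j)" "i < D2" "j < D2" using ijin by (cases ij) auto
    have "snd (F k) $$ (i,j) * snd (F k) $$ (i,j) \<le> 1"
      using sqs_entry[OF ij(2,3), of "snd (F k)"] psum[of k] nn1[of k] by linarith
    then show ?thesis unfolding ij(1) by (metis abs_le_square_iff abs_one mult_1 power2_eq_square)
  qed
  obtain r1 where r1: "strict_mono r1" "\<forall>ij\<in>{..<D1} \<times> {..<D1}. convergent (\<lambda>k. fst (F (r1 k)) $$ ij)"
    using bw_finite[where I="{..<D1} \<times> {..<D1}" and f="\<lambda>k ij. fst (F k) $$ ij" and C=1] b1 by auto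
  obtain r2 where r2: "strict_mono r2" "\<forall>ij\<in>{..<D2} \<times> {..<D2}. convergent (\<lambda>k. snd (F (r1 (r2 k))) $$ ij)"
    using bw_finite[where I="{..<D2} \<times> {..<D2}" and f="\<lambda>k ij. snd (F (r1 k)) $$ ij" and C=1] b2 by auto
  define r where "r k = r1 (r2 k)" for k
  have r: "strict_mono r" using strict_mono_o[OF r1(1) r2(1)] unfolding r_def by (simp add: o_def)
  define Lk where "Lk k = fst (F (r k))" for k
  define Tk where "Tk k = snd (F (r k))" for k
  have cL: "convergent (\<lambda>k. Lk k $$ (i,j))" if "i < D1" "j < D1" for i j
  proof -
    have "convergent ((\<lambda>k. fst (F (r1 k)) $$ (i,j)) \<circ> r2)"
      using r1(2) that by (intro convergent_subseq_convergent r2(1)) auto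
    then show ?thesis unfolding Lk_def r_def by (simp add: o_def)
  qed
  have cT: "convergent (\<lambda>k. Tk k $$ (i,j))" if "i < D2" "j < D2" for i j
    using r2(2) that unfolding Tk_def r_def by auto
  define Ls where "Ls = mat D1 D1 (\<lambda>(i,j). lim (\<lambda>k. Lk k $$ (i,j)))"
  define Ts where "Ts = mat D2 D2 (\<lambda>(i,j). lim (\<lambda>k. Tk k $$ (i,j)))"
  have Lsc: "Ls \<in> carrier_mat D1 D1" unfolding Ls_def by simp
  have Tsc: "Ts \<in> carrier_mat D2 D2" unfolding Ts_def by simp
  have eL: "econv Lk Ls" unfolding econv_def
  proof (intro conjI allI impI)
    fix k show "Lk k \<in> carrier_mat (dim_row Ls) (dim_col Ls)" unfolding Lk_def Ls_def using Fc by simp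
  next
    fix i j assume "i < dim_row Ls" "j < dim_col Ls"
    then have ij: "i < D1" "j < D1" unfolding Ls_def by auto
    show "(\<lambda>k. Lk k $$ (i,j)) \<longlonglongrightarrow> Ls $$ (i,j)"
      using cL[OF ij] ij unfolding Ls_def by (simp add: convergent_LIMSEQ_iff)
  qed
  have eT: "econv Tk Ts" unfolding econv_def
  proof (intro conjI allI impI)
    fix k show "Tk k \<in> carrier_mat (dim_row Ts) (dim_col Ts)" unfolding Tk_def Ts_def using Fc by simp
  next
    fix i j assume "i < dim_row Ts" "j < dim_col Ts"
    then have ij: "i < D2" "j < D2" unfolding Ts_def by auto
    show "(\<lambda>k. Tk k $$ (i,j)) \<longlonglongrightarrow> Ts $$ (i,j)"
      using cT[OF ij] ij unfolding Ts_def by (simp add: convergent_LIMSEQ_iff)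
  qed
  have Lss: "transpose_mat Ls = Ls"
  proof (rule eq_matI)
    fix i j assume "i < dim_row Ls" "j < dim_col Ls"
    then have ij: "i < D1" "j < D1" unfolding Ls_def by auto
    have "(\<lambda>k. Lk k $$ (j,i)) = (\<lambda>k. Lk k $$ (i,j))"
      unfolding Lk_def using sym_entry[OF Fc(1,2)] ij by auto
    then show "transpose_mat Ls $$ (i,j) = Ls $$ (i,j)" using ij unfolding Ls_def by simp
  qed (use Lsc in auto)
  have Tss: "transpose_mat Ts = Ts"
  proof (rule eq_matI)
    fix i j assume "i < dim_row Ts" "j < dim_col Ts"
    then have ij: "i < D2" "j < D2" unfolding Ts_def by auto
    have "(\<lambda>k. Tk k $$ (j,i)) = (\<lambda>k. Tk k $$ (i,j))"
      unfolding Tk_def using sym_entry[OF Fc(3,4)] ij by auto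
    then show "transpose_mat Ts $$ (i,j) = Ts $$ (i,j)" using ij unfolding Ts_def by simp
  qed (use Tsc in auto)
  have eA: "econv (\<lambda>k. AoG E U (Lk k, Tk k)) (AoG E U (Ls, Ts))"
    by (rule econv_AoG[OF E U eL Lsc eT Tsc])
  have Asc: "AoG E U (Ls, Ts) \<in> carrier_mat D2 D2" using AoG_carrier[OF E U] Lsc Tsc by simp
  have A0: "AoG E U (Ls, Ts) = 0\<^sub>m D2 D2"
  proof (rule eq_matI)
    fix i j assume "i < dim_row (0\<^sub>m D2 D2 :: real mat)" "j < dim_col (0\<^sub>m D2 D2 :: real mat)"
    then have ij: "i < D2" "j < D2" by auto
    have lim1: "(\<lambda>k. AoG E U (Lk k, Tk k) $$ (i,j)) \<longlonglongrightarrow> AoG E U (Ls, Ts) $$ (i,j)"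
      using eA ij Asc unfolding econv_def by auto
    have "(\<lambda>k. AoG E U (Lk k, Tk k) $$ (i,j)) \<longlonglongrightarrow> 0"
    proof (rule tendsto_0_le[OF LIMSEQ_inverse_real_of_nat, where K=1])
      show "\<forall>\<^sub>F k in sequentially. norm (AoG E U (Lk k, Tk k) $$ (i,j)) \<le> norm (inverse (real (Suc k))) * 1"
      proof (intro always_eventually allI)
        fix k
        have XX: "(Lk k, Tk k) = F (r k)" unfolding Lk_def Tk_def by simp
        have c: "AoG E U (F (r k)) \<in> carrier_mat D2 D2" using AoG_carrier[OF E U Fc(1) Fc(3)] .
        have "\<bar>AoG E U (F (r k)) $$ (i,j)\<bar> \<le> fro (AoG E U (F (r k)))" by (rule fro_entry[OF c ij])
        also have "\<dots> < inverse (real (Suc (r k)))" by (rule F(3))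
        also have "\<dots> \<le> inverse (real (Suc k))" using seq_suble[OF r, of k] by (simp add: field_simps)
        finally show "norm (AoG E U (Lk k, Tk k) $$ (i,j)) \<le> norm (inverse (real (Suc k))) * 1"
          unfolding XX by simp
      qed
    qed
    then show "AoG E U (Ls, Ts) $$ (i,j) = 0\<^sub>m D2 D2 $$ (i,j)" using LIMSEQ_unique[OF lim1] ij by simp
  qed (use Asc in auto)
  have orth: "pinner (F k) (Ls, Ts) = 0" for k
    using F(1)[of k] Lsc Lss Tsc Tss A0 unfolding SWG_def by auto
  have "(\<lambda>k. pinner (Lk k, Tk k) (Ls, Ts)) \<longlonglongrightarrow> pinner (Ls, Ts) (Ls, Ts)"
    by (rule econv_pinner[OF eL econv_const eT econv_const Lsc Lsc Tsc Tsc])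
  moreover have "pinner (Lk k, Tk k) (Ls, Ts) = 0" for k unfolding Lk_def Tk_def using orth by simp
  ultimately have z: "pinner (Ls, Ts) (Ls, Ts) = 0" by (simp add: LIMSEQ_const_iff)
  have "(\<lambda>k. pinner (Lk k, Tk k) (Lk k, Tk k)) \<longlonglongrightarrow> pinner (Ls, Ts) (Ls, Ts)"
    by (rule econv_pinner[OF eL eL eT eT Lsc Lsc Tsc Tsc])
  moreover have "pinner (Lk k, Tk k) (Lk k, Tk k) = 1" for k unfolding Lk_def Tk_def using F(2) by simp
  ultimately have "pinner (Ls, Ts) (Ls, Ts) = 1" by (simp add: LIMSEQ_const_iff)
  then show False using z by simp
qed


lemma trace_ident:
  assumes cE: "E \<in> carrier_mat D2 D1" and cU: "U \<in> carrier_mat D2 D2"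
    and cL: "L \<in> carrier_mat D1 D1" and cT: "Th \<in> carrier_mat D2 D2" and cS: "S \<in> carrier_mat D2 D2"
    and hE: "transpose_mat E * S * E = Tm" and hU: "transpose_mat U * S * U = S"
  shows "mtrace (L * Tm) = mtrace (AoG E U (L, Th) * S)"
proof -
  have cEt: "transpose_mat E \<in> carrier_mat D1 D2" using cE by simp
  have cUt: "transpose_mat U \<in> carrier_mat D2 D2" using cU by simp
  have c1: "E * L * transpose_mat E \<in> carrier_mat D2 D2" using cE cL cEt by auto
  have c2: "U * Th * transpose_mat U \<in> carrier_mat D2 D2" using cU cT cUt by auto
  have dist: "AoG E U (L, Th) * S = (E * L * transpose_mat E) * S + (U * Th * transpose_mat U) * S - Th * S"
    unfolding AoG_def fst_conv snd_conv
    using c1 c2 cT cS by (simp add: add_mult_distrib_mat[of _ D2 D2] minus_mult_distrib_mat[of _ D2 D2])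
  have a1: "(E * L * transpose_mat E) * S = E * (L * (transpose_mat E * S))"
    using assoc_mult_mat[OF mult_carrier_mat[OF cE cL] cEt cS] assoc_mult_mat[OF cE cL mult_carrier_mat[OF cEt cS]]
    by simp
  have t1: "mtrace ((E * L * transpose_mat E) * S) = mtrace (L * Tm)"
  proof -
    have "mtrace ((E * L * transpose_mat E) * S) = mtrace ((L * (transpose_mat E * S)) * E)"
      unfolding a1 by (rule mtrace_comm[OF cE]) (use cL cEt cS in auto)
    also have "(L * (transpose_mat E * S)) * E = L * Tm"
      using assoc_mult_mat[OF cL mult_carrier_mat[OF cEt cS] cE] hE by simp
    finally show ?thesis .
  qed
  have a2: "(U * Th * transpose_mat U) * S = U * (Th * (transpose_mat U * S))"
    using assoc_mult_mat[OF mult_carrier_mat[OF cU cT] cUt cS] assoc_mult_mat[OF cU cT mult_carrier_mat[OF cUt cS]]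
    by simp
  have t2: "mtrace ((U * Th * transpose_mat U) * S) = mtrace (Th * S)"
  proof -
    have "mtrace ((U * Th * transpose_mat U) * S) = mtrace ((Th * (transpose_mat U * S)) * U)"
      unfolding a2 by (rule mtrace_comm[OF cU]) (use cT cUt cS in auto)
    also have "(Th * (transpose_mat U * S)) * U = Th * S"
      using assoc_mult_mat[OF cT mult_carrier_mat[OF cUt cS] cU] hU by simp
    finally show ?thesis .
  qed
  have cc1: "(E * L * transpose_mat E) * S \<in> carrier_mat D2 D2" using c1 cS by auto
  have cc2: "(U * Th * transpose_mat U) * S \<in> carrier_mat D2 D2" using c2 cS by auto
  have cc3: "Th * S \<in> carrier_mat D2 D2" using cT cS by auto
  have "mtrace (AoG E U (L, Th) * S) = mtrace ((E * L * transpose_mat E) * S) + mtrace ((U * Th * transpose_mat U) * S) - mtrace (Th * S)"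
    unfolding dist using cc1 cc2 cc3 by (simp add: mtrace_add[of _ D2])
  then show ?thesis using t1 t2 by simp
qed

lemma mtrace_mult_eq: assumes "A \<in> carrier_mat d d" "S \<in> carrier_mat d d"
  shows "mtrace (A * S) = (\<Sum>i<d. \<Sum>j<d. A $$ (i,j) * S $$ (j,i))"
  using assms unfolding mtrace_def by (auto simp: scalar_prod_def lessThan_atLeast0 intro!: sum.cong)

lemma ln_abs_eq: "ln \<bar>x\<bar> = ln (x::real)"
  by (cases "x \<ge> 0") (simp_all add: ln_minus)

lemma growth:
  fixes eps D C :: real
  assumes "eps > 0" "D \<ge> 0"
  shows "filterlim (\<lambda>t. eps * t - max 0 (C + D * ln t)) at_top at_top"
proof -
  have lim: "filterlim (\<lambda>t. (- \<bar>C\<bar>) + (eps / 2) * t) at_top at_top"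
    by (rule filterlim_tendsto_add_at_top[OF tendsto_const filterlim_tendsto_pos_mult_at_top[OF tendsto_const _ filterlim_ident]])
       (use assms in simp)
  define T0 where "T0 = max 1 ((4 * D / eps)^2)"
  have "eventually (\<lambda>t. t \<ge> T0) at_top" by (rule eventually_ge_at_top)
  then have "eventually (\<lambda>t. (- \<bar>C\<bar>) + (eps / 2) * t \<le> eps * t - max 0 (C + D * ln t)) at_top"
  proof (rule eventually_mono)
    fix t assume t: "T0 \<le> t"
    then have t1: "1 \<le> t" unfolding T0_def by simp
    have st: "4 * D / eps \<le> sqrt t"
    proof -
      have "(4 * D / eps)^2 \<le> t" using t unfolding T0_def by simp
      then have "sqrt ((4 * D / eps)^2) \<le> sqrt t" by (rule real_sqrt_le_mono)
      then show ?thesis using assms by simp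
    qed
    have "ln t = 2 * ln (sqrt t)" using t1 by (simp add: ln_sqrt)
    also have "\<dots> \<le> 2 * sqrt t" using ln_bound[of "sqrt t"] t1 by simp
    finally have lnt: "ln t \<le> 2 * sqrt t" .
    have "D * ln t \<le> D * (2 * sqrt t)" using lnt assms(2) by (rule mult_left_mono)
    also have "\<dots> = (eps / 2) * ((4 * D / eps) * sqrt t)" using assms by (simp add: field_simps)
    also have "\<dots> \<le> (eps / 2) * (sqrt t * sqrt t)"
      using st assms t1 by (intro mult_left_mono mult_right_mono) auto
    also have "\<dots> = (eps / 2) * t" using t1 by simp
    finally have "D * ln t \<le> (eps / 2) * t" .
    moreover have "0 \<le> D * ln t" using assms(2) t1 by simp
    moreover have "0 \<le> t" using t1 by simp
    ultimately show "(- \<bar>C\<bar>) + (eps / 2) * t \<le> eps * t - max 0 (C + D * ln t)" using assms by (auto simp: max_def)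
  qed
  then show ?thesis by (rule filterlim_at_top_mono[OF lim])
qed


theorem lemma4:
  fixes m n N :: nat and Sig :: "nat \<Rightarrow> real mat" and X :: "nat \<Rightarrow> real mat \<times> real mat"
  assumes "m \<ge> 1" and "n \<ge> 1" and "N > 2*n"
    and "\<And>i. i \<le> n \<Longrightarrow> Sig i \<in> carrier_mat m m"
    and "\<exists>S. posdef (m*N) S \<and>
           transpose_mat (Emat m n N) * S * Emat m n N = Tmat m n Sig \<and>
           transpose_mat (Umat m N) * S * Umat m N = S"
    and "\<And>k. X k \<in> Lplus m n N"
    and "filterlim (\<lambda>k. pnorm (X k)) at_top sequentially"
  shows "filterlim (\<lambda>k. fro (Aop m n N (X k))) at_top sequentially \<and>
         filterlim (\<lambda>k. Jfun m n N Sig (X k)) at_top sequentially"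
proof -
  define D1 where "D1 = m*(n+1)"
  define D2 where "D2 = m*N"
  define E where "E = Emat m n N"
  define U where "U = Umat m N"
  have cE: "E \<in> carrier_mat D2 D1" unfolding E_def Emat_def D1_def D2_def by simp
  have cU: "U \<in> carrier_mat D2 D2" unfolding U_def Umat_def D2_def by simp
  have AopE: "Aop m n N = AoG E U" unfolding E_def U_def by (rule ext) (simp add: Aop_def AoG_def)
  have XL1: "SWG D1 D2 E U (X k)" for k
    using assms(6)[of k] unfolding Lplus_def symS_def SWG_def AopE D1_def D2_def by auto
  have XL2: "posdef D2 (AoG E U (X k))" for k
    using assms(6)[of k] unfolding Lplus_def AopE D2_def by auto
  obtain c where c: "c > 0" "\<forall>X. SWG D1 D2 E U X \<longrightarrow> c * pnorm X \<le> fro (AoG E U X)"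
    using lower_bound[OF cE cU] by blast
  have P1: "filterlim (\<lambda>k. fro (AoG E U (X k))) at_top sequentially"
  proof (rule filterlim_at_top_mono[OF filterlim_tendsto_pos_mult_at_top[OF tendsto_const c(1) assms(7)]])
    show "\<forall>\<^sub>F k in sequentially. c * pnorm (X k) \<le> fro (AoG E U (X k))"
      by (intro always_eventually allI) (use c(2) XL1 in blast)
  qed
  obtain S where S: "posdef D2 S" "transpose_mat E * S * E = Tmat m n Sig" "transpose_mat U * S * U = S"
    using assms(5) unfolding D2_def E_def U_def by blast
  have cS: "S \<in> carrier_mat D2 D2" using S(1) unfolding posdef_def by blast
  have symS': "\<forall>i<D2. \<forall>j<D2. S $$ (i,j) = S $$ (j,i)" using posdef_sym[OF S(1)] .
  obtain eps where eps: "eps > 0" "\<forall>f. eps * (\<Sum>i<D2. f i * f i) \<le> qf D2 (\<lambda>i j. S $$ (i,j)) f f"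
    using posdef_eps[OF S(1)] by blast
  have "N \<ge> 1" using assms(3) by linarith
  then have D2pos: "D2 \<ge> 1" unfolding D2_def using assms(1) by simp
  define tr where "tr k = (\<Sum>i<D2. AoG E U (X k) $$ (i,i))" for k
  have key: "fro (AoG E U (X k)) \<le> real D2 * tr k \<and>
     (tr k > 0 \<longrightarrow> eps * tr k - max 0 (ln (fact D2) + real D2 * ln (tr k)) \<le> Jfun m n N Sig (X k))" for k
  proof -
    define A where "A = AoG E U (X k)"
    define Af where "Af i j = A $$ (i,j)" for i j
    have pdA: "posdef D2 A" unfolding A_def by (rule XL2)
    have cA: "A \<in> carrier_mat D2 D2" using pdA unfolding posdef_def by blast
    have symA: "\<forall>i<D2. \<forall>j<D2. Af i j = Af j i" unfolding Af_def using posdef_sym[OF pdA] .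
    have psdA: "\<forall>f. 0 \<le> qf D2 Af f f" unfolding Af_def using posdef_psd[OF pdA] by blast
    have trA: "tr k = (\<Sum>i<D2. A $$ (i,i))" unfolding tr_def A_def ..
    have diag: "0 \<le> A $$ (i,i)" if "i < D2" for i using psd_diag[OF psdA that] unfolding Af_def .
    have tr0: "0 \<le> tr k" unfolding trA using diag by (intro sum_nonneg) auto
    have dle: "A $$ (i,i) \<le> tr k" if "i < D2" for i
      unfolding trA by (rule member_le_sum[where f="\<lambda>i. A $$ (i,i)"]) (use that diag in auto)
    have ent: "\<bar>A $$ (i,j)\<bar> \<le> tr k" if "i < D2" "j < D2" for i j
      using psd_offdiag[OF symA psdA that] dle[OF that(1)] dle[OF that(2)] unfolding Af_def by linarith
    have F1: "fro A \<le> real D2 * tr k"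
    proof -
      have "fro A = sqrt (\<Sum>i<D2. \<Sum>j<D2. (A $$ (i,j))^2)" using cA unfolding fro_def by simp
      also have "(\<Sum>i<D2. \<Sum>j<D2. (A $$ (i,j))^2) \<le> (\<Sum>i<D2. \<Sum>j<D2. (tr k)^2)"
      proof (intro sum_mono)
        fix i j assume "i \<in> {..<D2}" "j \<in> {..<D2}"
        then have "\<bar>A $$ (i,j)\<bar> ^ 2 \<le> (tr k)^2" using ent by (intro power_mono) auto
        then show "(A $$ (i,j))^2 \<le> (tr k)^2" by simp
      qed
      also have "(\<Sum>i<D2. \<Sum>j<D2. (tr k)^2) = (real D2 * tr k)^2" by (simp add: power2_eq_square)
      finally have "fro A \<le> sqrt ((real D2 * tr k)^2)" by (simp add: real_sqrt_le_mono)
      then show ?thesis using tr0 by simp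
    qed
    have J: "eps * tr k - max 0 (ln (fact D2) + real D2 * ln (tr k)) \<le> Jfun m n N Sig (X k)" if tp: "tr k > 0"
    proof -
      obtain ws where ws: "\<forall>i<D2. \<forall>j<D2. Af i j = (\<Sum>w\<leftarrow>ws. w i * w j)"
        using psd_decomp[OF symA psdA] by blast
      have "eps * tr k \<le> (\<Sum>i<D2. \<Sum>j<D2. Af i j * S $$ (j,i))"
        unfolding trA using trace_bound[OF ws symS' eps(2)] unfolding Af_def .
      also have "\<dots> = mtrace (A * S)" unfolding Af_def using mtrace_mult_eq[OF cA cS] by simp
      also have "\<dots> = mtrace (fst (X k) * Tmat m n Sig)"
      proof -
        have cL: "fst (X k) \<in> carrier_mat D1 D1" and cT: "snd (X k) \<in> carrier_mat D2 D2"
          using XL1[of k] unfolding SWG_def by auto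
        have "A = AoG E U (fst (X k), snd (X k))" unfolding A_def by simp
        then show ?thesis using trace_ident[OF cE cU cL cT cS S(2) S(3)] by simp
      qed
      finally have t1: "eps * tr k \<le> mtrace (fst (X k) * Tmat m n Sig)" .
      have dA: "\<bar>det A\<bar> \<le> fact D2 * tr k ^ D2"
        using det_bound[OF cA tr0] ent by blast
      have lnb: "ln (det A) \<le> max 0 (ln (fact D2) + real D2 * ln (tr k))"
      proof (cases "det A = 0")
        case True then show ?thesis by simp
      next
        case False
        have "ln (det A) = ln \<bar>det A\<bar>" by (simp add: ln_abs_eq)
        also have "\<dots> \<le> ln (fact D2 * tr k ^ D2)"
          using dA False tp by (subst ln_le_cancel_iff) auto
        also have "\<dots> = ln (fact D2) + real D2 * ln (tr k)"
          using tp by (simp add: ln_mult ln_realpow)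
        finally show ?thesis by simp
      qed
      have "Jfun m n N Sig (X k) = mtrace (fst (X k) * Tmat m n Sig) - ln (det A)"
        unfolding Jfun_def A_def AopE ..
      then show ?thesis using t1 lnb by linarith
    qed
    show ?thesis using F1 J unfolding A_def by blast
  qed
  have P2: "filterlim tr at_top sequentially"
  proof (rule filterlim_at_top_mono[OF filterlim_tendsto_pos_mult_at_top[OF tendsto_const[of "1 / real D2"] _ P1]])
    show "0 < 1 / real D2" using D2pos by simp
    show "\<forall>\<^sub>F k in sequentially. 1 / real D2 * fro (AoG E U (X k)) \<le> tr k"
    proof (intro always_eventually allI)
      fix k
      have "fro (AoG E U (X k)) \<le> real D2 * tr k" using key by blast
      then show "1 / real D2 * fro (AoG E U (X k)) \<le> tr k" using D2pos by (simp add: field_simps)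
    qed
  qed
  have G: "filterlim (\<lambda>k. eps * tr k - max 0 (ln (fact D2) + real D2 * ln (tr k))) at_top sequentially"
    using filterlim_compose[OF growth[OF eps(1), of "real D2" "ln (fact D2)"] P2] by simp
  have ev: "\<forall>\<^sub>F k in sequentially. 1 \<le> tr k" using P2 unfolding filterlim_at_top by blast
  have P3: "filterlim (\<lambda>k. Jfun m n N Sig (X k)) at_top sequentially"
  proof (rule filterlim_at_top_mono[OF G])
    show "\<forall>\<^sub>F k in sequentially. eps * tr k - max 0 (ln (fact D2) + real D2 * ln (tr k)) \<le> Jfun m n N Sig (X k)"
    proof (rule eventually_mono[OF ev])
      fix k assume "1 \<le> tr k"
      then have "0 < tr k" by simp
      then show "eps * tr k - max 0 (ln (fact D2) + real D2 * ln (tr k)) \<le> Jfun m n N Sig (X k)"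
        using key[of k] by blast
    qed
  qed
  show ?thesis using P1 P3 unfolding AopE by blast
qed

end
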